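(* Suppose the conditional gradient algorithm chooses $\theta_k$ by the exact line search \[ \theta_k\in\arg\min_{\theta\in[0,1]}\{(1-\theta)\mathrm{gap}(x_k,g_k)+\mathcal{D}(x_k,s_k,\theta)\}, \] and suppose $q>1$, $r\in[0,1]$ are such that $(\mathcal D,\mathrm{gap})$ satisfies the $(q,r)$-growth property with some finite constant $M>0$. Then for $k=0,1,\dots$ \[ \mathrm{gap}_{k+1}\le \mathrm{gap}_k\Big(1-\tfrac{q-1}{q}\min\Big\{1,\Big(\tfrac{\mathrm{gap}_k^{1-r}}{M}\Big)^{\frac1{q-1}}\Big\}\Big). \] If $r=1$ then $\mathrm{gap}_k\le \mathrm{gap}_0\big(1-\frac{q-1}{q}\min\{1,M^{-1/(q-1)}\}\big)^k$ for all $k$. If $r\in[0,1)$ then $\mathrm{gap}_k\le\mathrm{gap}_0\big(1-\frac{q-1}{q}\big)^k$ for $k=0,1,\dots,k_0$, where $k_0$ is the smallest $k$ with $\mathrm{gap}_k^{1-r}\le M$, and for all $k\ge k_0$ \[ \mathrm{gap}_k\le\Big(\mathrm{gap}_{k_0}^{\frac{r-1}{q-1}}+\frac{1-r}{q}\cdot\frac{1}{M^{\frac1{q-1}}}\,(k-k_0)\Big)^{\frac{q-1}{r-1}}. \]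
   Context: Let $f,\Psi:\mathbb{R}^n\to\mathbb{R}\cup\{\infty\}$ be closed proper convex functions such that (A1) $f$ is differentiable on $\mathrm{dom}(\Psi)$, and (A2) for every $x\in\mathrm{dom}(f)$ the set $\arg\min_s\{\langle\nabla f(x),s\rangle+\Psi(s)\}$ is nonempty. $f^*,\Psi^*$ denote convex conjugates; $\arg\min_y\{\langle g,y\rangle+\Psi(y)\}=\partial\Psi^*(-g)$. $D_f(y,x)=f(y)-f(x)-\langle\nabla f(x),y-x\rangle$. Duality gap: $\mathrm{gap}(x,u)=f(x)+\Psi(x)+f^*(u)+\Psi^*(-u)$ for $x\in\mathrm{dom}(\Psi)$, $u\in\mathrm{dom}(f^* )$. For $x,s\in\mathrm{dom}(\Psi)$, $\theta\in[0,1]$: $\mathcal{D}(x,s,\theta)=D_f(x+\theta(s-x),x)+\Psi(x+\theta(s-x))-(1-\theta)\Psi(x)-\theta\Psi(s)$. Conditional gradient algorithm: given $x_0\in\mathrm{dom}(\Psi)$, for $k=0,1,2,\dots$ let $g_k=\nabla f(x_k)$, pick $s_k\in\arg\min_y\{\langle g_k,y\rangle+\Psi(y)\}$ and $\theta_k\in[0,1]$, and set $x_{k+1}=(1-\theta_k)x_k+\theta_k s_k$. The best duality gaps are $\mathrm{gap}_k=\min_{i=0,\dots,k}\mathrm{gap}(x_k,g_i)$. $(q,r)$-growth property ($q>1$, $r\in[0,1]$): there is a finite $M>0$ such that for all $x\in\mathrm{dom}(\Psi)$, $g=\nabla f(x)$ and $s\in\partial\Psi^*(-g)$, $\mathcal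 D(x,s,\theta)\le \frac{M\theta^q}{q}\mathrm{gap}(x,g)^r$ for all $\theta\in[0,1]$. *)

theory Defs
  imports "HOL-Analysis.Analysis"
begin

text \<open>Extended-real-valued functions on a Euclidean space ('a), representing
  functions R^n -> R \<union> {+\<infinity>}.\<close>

definition edom :: "('a \<Rightarrow> ereal) \<Rightarrow> 'a set" where
  "edom f = {x. f x \<noteq> \<infinity>}"

definition proper_fn :: "('a \<Rightarrow> ereal) \<Rightarrow> bool" where
  "proper_fn f \<longleftrightarrow> (\<forall>x. f x \<noteq> -\<infinity>) \<and> (\<exists>x. f x \<noteq> \<infinity>)"

definition convex_fn :: "('a::real_vector \<Rightarrow> ereal) \<Rightarrow> bool" where
  "convex_fn f \<longleftrightarrow> (\<forall>x y t. 0 \<le> t \<and> t \<le> 1 \<longrightarrow>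
     f ((1 - t) *\<^sub>R x + t *\<^sub>R y) \<le> ereal (1 - t) * f x + ereal t * f y)"

text \<open>closed = lower semicontinuous = closed epigraph\<close>
definition closed_fn :: "('a::topological_space \<Rightarrow> ereal) \<Rightarrow> bool" where
  "closed_fn f \<longleftrightarrow> closed {(x, t::real). f x \<le> ereal t}"

definition cpc_fn :: "('a::real_normed_vector \<Rightarrow> ereal) \<Rightarrow> bool" where
  "cpc_fn f \<longleftrightarrow> closed_fn f \<and> proper_fn f \<and> convex_fn f"

definition conj_fn :: "('a::real_inner \<Rightarrow> ereal) \<Rightarrow> 'a \<Rightarrow> ereal" where
  "conj_fn f u = (SUP x. ereal (u \<bullet> x) - f x)"

definition has_grad :: "('a::real_inner \<Rightarrow> ereal) \<Rightarrow> 'a \<Rightarrow> 'a \<Rightarrow> bool" where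
  "has_grad f x g \<longleftrightarrow> (\<forall>\<^sub>F y in nhds x. f y \<noteq> \<infinity>) \<and>
     ((\<lambda>y. real_of_ereal (f y)) has_derivative (\<lambda>h. g \<bullet> h)) (at x)"

definition grad :: "('a::real_inner \<Rightarrow> ereal) \<Rightarrow> 'a \<Rightarrow> 'a" where
  "grad f x = (SOME g. has_grad f x g)"

definition is_argmin_lin :: "('a::real_inner \<Rightarrow> ereal) \<Rightarrow> 'a \<Rightarrow> 'a \<Rightarrow> bool" where
  "is_argmin_lin Psi g s \<longleftrightarrow> (\<forall>y. ereal (g \<bullet> s) + Psi s \<le> ereal (g \<bullet> y) + Psi y)"

definition bregman :: "('a::real_inner \<Rightarrow> ereal) \<Rightarrow> 'a \<Rightarrow> 'a \<Rightarrow> ereal" where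
  "bregman f y x = f y - f x - ereal (grad f x \<bullet> (y - x))"

definition dgap :: "('a::real_inner \<Rightarrow> ereal) \<Rightarrow> ('a \<Rightarrow> ereal) \<Rightarrow> 'a \<Rightarrow> 'a \<Rightarrow> ereal" where
  "dgap f Psi x u = f x + Psi x + conj_fn f u + conj_fn Psi (- u)"

definition Dcal :: "('a::real_inner \<Rightarrow> ereal) \<Rightarrow> ('a \<Rightarrow> ereal) \<Rightarrow> 'a \<Rightarrow> 'a \<Rightarrow> real \<Rightarrow> ereal" where
  "Dcal f Psi x s \<theta> = bregman f (x + \<theta> *\<^sub>R (s - x)) x + Psi (x + \<theta> *\<^sub>R (s - x))
      - ereal (1 - \<theta>) * Psi x - ereal \<theta> * Psi s"

text \<open>power with the convention 0^0 = 1 (used for nonnegative bases)\<close>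
definition pw :: "real \<Rightarrow> real \<Rightarrow> real" where
  "pw a p = (if p = 0 then 1 else a powr p)"

definition growth :: "('a::real_inner \<Rightarrow> ereal) \<Rightarrow> ('a \<Rightarrow> ereal) \<Rightarrow> real \<Rightarrow> real \<Rightarrow> real \<Rightarrow> bool" where
  "growth f Psi q r M \<longleftrightarrow> (\<forall>x \<in> edom Psi. \<forall>s. is_argmin_lin Psi (grad f x) s \<longrightarrow>
     (\<forall>\<theta>\<in>{0..1}. Dcal f Psi x s \<theta> \<le>
        ereal (M * \<theta> powr q / q * pw (real_of_ereal (dgap f Psi x (grad f x))) r)))"

text \<open>best duality gap gap_k = min_{i \<le> k} gap(x_k, g_i)\<close>
definition best_gap :: "('a::real_inner \<Rightarrow> ereal) \<Rightarrow> ('a \<Rightarrow> ereal) \<Rightarrow> (nat \<Rightarrow> 'a) \<Rightarrow> nat \<Rightarrow> real" where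
  "best_gap f Psi x k = Min ((\<lambda>i. real_of_ereal (dgap f Psi (x k) (grad f (x i)))) ` {..k})"

end

theory Submission imports Defs begin


lemma pw_prod:
  fixes g G r :: real
  assumes "0 \<le> g" "g \<le> G" "0 \<le> r" "r \<le> 1"
  shows "pw g (1 - r) * pw G r \<le> G"
proof (cases "r = 0")
  case True then show ?thesis using assms by (simp add: pw_def)
next
  case r0: False
  show ?thesis
  proof (cases "r = 1")
    case True then show ?thesis using assms by (simp add: pw_def)
  next
    case False
    have "g powr (1 - r) \<le> G powr (1 - r)" using assms False by (intro powr_mono2) auto
    hence "g powr (1 - r) * G powr r \<le> G powr (1 - r) * G powr r"
      by (intro mult_right_mono) auto
    also have "\<dots> = G powr 1" by (simp add: powr_add[symmetric])
    also have "\<dots> = G" using assms by simp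
    finally show ?thesis using r0 False by (simp add: pw_def)
  qed
qed

lemma powr_split:
  fixes t q :: real assumes "0 \<le> t"
  shows "t powr q = t * t powr (q - 1)"
proof (cases "t = 0")
  case True then show ?thesis by simp
next
  case False
  have "t powr q = t powr (1 + (q - 1))" by simp
  also have "\<dots> = t powr 1 * t powr (q - 1)" by (rule powr_add)
  finally show ?thesis using assms by simp
qed

lemma step_rate:
  fixes g G q r M :: real
  assumes q: "q > 1" and r: "0 \<le> r" "r \<le> 1" and M: "M > 0"
    and g: "0 \<le> g" "g \<le> G"
    and an: "\<forall>t\<in>{0..1}. an \<le> g - t * G + M * t powr q / q * pw G r"
  shows "an \<le> g * (1 - (q - 1) / q * min 1 ((pw g (1 - r) / M) powr (1 / (q - 1))))"
proof -
  define X where "X = pw g (1 - r) / M"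
  define t where "t = min 1 (X powr (1 / (q - 1)))"
  have X0: "0 \<le> X" using M g by (auto simp: X_def pw_def)
  have t01: "t \<in> {0..1}" by (auto simp: t_def)
  have "t powr (q - 1) \<le> (X powr (1 / (q - 1))) powr (q - 1)"
    using t01 q by (intro powr_mono2) (auto simp: t_def)
  also have "\<dots> = X" using q X0 by (simp add: powr_powr)
  finally have tq: "t powr (q - 1) \<le> X" .
  have pwG: "0 \<le> pw G r" using g by (auto simp: pw_def)
  have "M * t powr (q - 1) * pw G r \<le> M * X * pw G r"
    using tq M pwG by (intro mult_right_mono mult_left_mono) auto
  also have "\<dots> = pw g (1 - r) * pw G r" using M by (simp add: X_def)
  also have "\<dots> \<le> G" using pw_prod[OF g r] .
  finally have key: "M * t powr (q - 1) * pw G r \<le> G" .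
  have "M * t powr q / q * pw G r = t / q * (M * t powr (q - 1) * pw G r)"
    using t01 by (simp add: powr_split[of t q])
  also have "\<dots> \<le> t / q * G" using key t01 q by (intro mult_left_mono) auto
  finally have "an \<le> g - t * G + t / q * G" using an t01 by fastforce
  also have "\<dots> = g - (q - 1) / q * t * G" using q by (simp add: field_simps)
  also have "\<dots> \<le> g - (q - 1) / q * t * g"
    using q t01 g by (intro diff_left_mono mult_left_mono) auto
  finally show ?thesis by (simp add: t_def X_def algebra_simps)
qed



lemma bern:
  fixes t \<alpha> :: real assumes "0 \<le> t" "t < 1" "0 < \<alpha>"
  shows "1 + \<alpha> * t \<le> (1 - t) powr (- \<alpha>)"
proof -
  have "ln (1 - t) \<le> - t" using ln_le_minus_one[of "1 - t"] assms by simp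
  hence "\<alpha> * ln (1 - t) \<le> \<alpha> * (- t)" using assms by (intro mult_left_mono) auto
  hence "1 + \<alpha> * t \<le> 1 + (- \<alpha> * ln (1 - t))" by simp
  also have "\<dots> \<le> exp (- \<alpha> * ln (1 - t))" by (rule exp_ge_add_one_self)
  also have "\<dots> = (1 - t) powr (- \<alpha>)" using assms by (simp add: powr_def)
  finally show ?thesis .
qed

lemma rate:
  fixes a G :: "nat \<Rightarrow> real" and q r M :: real
  assumes q: "q > 1" and r: "0 \<le> r" "r \<le> 1" and M: "M > 0"
    and a_nn: "\<forall>k. 0 \<le> a k" and aG: "\<forall>k. a k \<le> G k"
    and step: "\<forall>k. \<forall>t\<in>{0..1}. a (Suc k) \<le> a k - t * G k + M * t powr q / q * pw (G k) r"
  shows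
    "(\<forall>k. a (Suc k) \<le> a k *
        (1 - (q - 1) / q * min 1 ((pw (a k) (1 - r) / M) powr (1 / (q - 1)))))
   \<and> (r = 1 \<longrightarrow> (\<forall>k. a k \<le>
        a 0 * (1 - (q - 1) / q * min 1 (M powr (- 1 / (q - 1)))) ^ k))
   \<and> (r < 1 \<longrightarrow> (\<exists>k0. a k0 powr (1 - r) \<le> M
        \<and> (\<forall>k < k0. M < a k powr (1 - r))
        \<and> (\<forall>k \<le> k0. a k \<le> a 0 * (1 - (q - 1) / q) ^ k)
        \<and> (\<forall>k \<ge> k0. a k \<le>
             (if a k0 = 0 then 0 else
              (a k0 powr ((r - 1) / (q - 1))
                 + (1 - r) / q * (1 / M powr (1 / (q - 1))) * real (k - k0))
                powr ((q - 1) / (r - 1))))))"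
proof -
  have S1: "a (Suc k) \<le> a k * (1 - (q - 1) / q * min 1 ((pw (a k) (1 - r) / M) powr (1 / (q - 1))))" for k
    using step_rate[OF q r M, of "a k" "G k" "a (Suc k)"] a_nn aG step by blast
  have mono1: "a (Suc k) \<le> a k" for k
    using step[rule_format, of 0 k] by simp
  have monoN: "a n \<le> a m" if "m \<le> n" for m n
    using that by (induction n rule: dec_induct) (auto intro: order_trans[OF mono1])
  have P2: "r = 1 \<longrightarrow> (\<forall>k. a k \<le> a 0 * (1 - (q - 1) / q * min 1 (M powr (- 1 / (q - 1)))) ^ k)"
  proof (intro impI allI)
    fix k assume r1: "r = 1"
    define c where "c = 1 - (q - 1) / q * min 1 (M powr (- 1 / (q - 1)))"
    have eq: "M powr (- 1 / (q - 1)) = (1 / M) powr (1 / (q - 1))"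
      using M by (simp add: powr_divide powr_minus_divide)
    have c0: "0 \<le> c"
    proof -
      have "(q - 1) / q * min 1 (M powr (- 1 / (q - 1))) \<le> (q - 1) / q * 1"
        using q by (intro mult_left_mono) auto
      also have "\<dots> \<le> 1" using q by simp
      finally show ?thesis by (simp add: c_def)
    qed
    have st: "a (Suc k) \<le> a k * c" for k
      using S1[of k] r1 eq by (simp add: pw_def c_def)
    show "a k \<le> a 0 * c ^ k" unfolding c_def[symmetric]
    proof (induction k)
      case 0 then show ?case by simp
    next
      case (Suc k)
      have "a (Suc k) \<le> a k * c" by (rule st)
      also have "\<dots> \<le> a 0 * c ^ k * c" using Suc c0 by (intro mult_right_mono) auto
      finally show ?case by (simp add: algebra_simps)
    qed
  qed
  have P3: "r < 1 \<longrightarrow> (\<exists>k0. a k0 powr (1 - r) \<le> M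
        \<and> (\<forall>k < k0. M < a k powr (1 - r))
        \<and> (\<forall>k \<le> k0. a k \<le> a 0 * (1 - (q - 1) / q) ^ k)
        \<and> (\<forall>k \<ge> k0. a k \<le>
             (if a k0 = 0 then 0 else
              (a k0 powr ((r - 1) / (q - 1))
                 + (1 - r) / q * (1 / M powr (1 / (q - 1))) * real (k - k0))
                powr ((q - 1) / (r - 1)))))"
  proof
    assume r1: "r < 1"
    have big: "a (Suc k) \<le> a k * (1 - (q - 1) / q)" if "M < a k powr (1 - r)" for k
    proof -
      have "1 < pw (a k) (1 - r) / M" using that r1 M by (simp add: pw_def)
      hence "1 \<le> (pw (a k) (1 - r) / M) powr (1 / (q - 1))"
        using q by (intro ge_one_powr_ge_zero) auto
      thus ?thesis using S1[of k] by simp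
    qed
    have qq: "1 - (q - 1) / q = 1 / q" using q by (simp add: field_simps)
    define P where "P k \<longleftrightarrow> a k powr (1 - r) \<le> M" for k
    have exP: "\<exists>k. P k"
    proof (rule ccontr)
      assume "\<not> (\<exists>k. P k)"
      hence nP: "M < a k powr (1 - r)" for k by (auto simp: P_def not_le)
      have dec: "a k \<le> a 0 * (1 / q) ^ k" for k
      proof (induction k)
        case 0 then show ?case by simp
      next
        case (Suc k)
        have "a (Suc k) \<le> a k * (1 / q)" using big[OF nP[of k]] qq by simp
        also have "\<dots> \<le> a 0 * (1 / q) ^ k * (1 / q)" using Suc q by (intro mult_right_mono) auto
        finally show ?case by (simp add: algebra_simps)
      qed
      define e where "e = M powr (1 / (1 - r)) / (a 0 + 1)"
      have e0: "0 < e" unfolding e_def using M a_nn[rule_format, of 0] by (intro divide_pos_pos) auto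
      obtain n where n: "(1 / q) ^ n < e" using real_arch_pow_inv[OF e0, of "1/q"] q by auto
      have "a n \<le> a 0 * (1 / q) ^ n" by (rule dec)
      also have "\<dots> \<le> (a 0 + 1) * (1 / q) ^ n" using q by (intro mult_right_mono) auto
      also have "\<dots> < (a 0 + 1) * e" using n a_nn[rule_format, of 0] by (intro mult_strict_left_mono) auto
      also have "\<dots> = M powr (1 / (1 - r))" using a_nn[rule_format, of 0] by (simp add: e_def)
      finally have "a n < M powr (1 / (1 - r))" .
      hence "a n powr (1 - r) < (M powr (1 / (1 - r))) powr (1 - r)"
        using r1 a_nn by (intro powr_less_mono2) auto
      also have "\<dots> = M" using r1 M by (simp add: powr_powr)
      finally show False using nP[of n] by simp
    qed
    define k0 where "k0 = (LEAST k. P k)"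
    have Pk0: "P k0" unfolding k0_def using exP by (rule LeastI_ex)
    have before: "M < a k powr (1 - r)" if "k < k0" for k
      using not_less_Least[OF that[unfolded k0_def]] by (simp add: P_def not_le)
    have part_a: "a k \<le> a 0 * (1 - (q - 1) / q) ^ k" if "k \<le> k0" for k
      using that
    proof (induction k)
      case 0 then show ?case by simp
    next
      case (Suc k)
      hence kk: "k < k0" by simp
      have "a (Suc k) \<le> a k * (1 - (q - 1) / q)" using big[OF before[OF kk]] .
      also have "\<dots> \<le> a 0 * (1 - (q - 1) / q) ^ k * (1 - (q - 1) / q)"
        using Suc kk q by (intro mult_right_mono) (auto simp: qq)
      finally show ?case by (simp add: algebra_simps)
    qed
    define \<alpha> where "\<alpha> = (1 - r) / (q - 1)"
    define \<beta> where "\<beta> = (1 - r) / q * (1 / M powr (1 / (q - 1)))"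
    have al0: "0 < \<alpha>" using r1 q by (simp add: \<alpha>_def)
    have be0: "0 < \<beta>" using r1 q M by (simp add: \<beta>_def)
    have Pafter: "P k" if "k0 \<le> k" for k
    proof -
      have "a k powr (1 - r) \<le> a k0 powr (1 - r)"
        using monoN[OF that] a_nn r1 by (intro powr_mono2) auto
      thus ?thesis using Pk0 by (simp add: P_def)
    qed
    have inc: "a (Suc k) = 0 \<or> a k powr (- \<alpha>) + \<beta> \<le> a (Suc k) powr (- \<alpha>)" if "k0 \<le> k" for k
    proof (cases "a (Suc k) = 0")
      case True then show ?thesis by simp
    next
      case False
      hence as0: "0 < a (Suc k)" using a_nn less_eq_real_def by auto
      hence ak0: "0 < a k" using mono1[of k] by linarith
      define X where "X = a k powr (1 - r) / M"
      have X1: "X \<le> 1" using Pafter[OF that] M by (simp add: X_def P_def)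
      have X0: "0 \<le> X" using M by (simp add: X_def)
      have m: "min 1 (X powr (1 / (q - 1))) = X powr (1 / (q - 1))"
        using X0 X1 q by (simp add: powr_le1)
      define t where "t = (q - 1) / q * X powr (1 / (q - 1))"
      have t0: "0 \<le> t" using q by (simp add: t_def)
      have st: "a (Suc k) \<le> a k * (1 - t)"
        using S1[of k] r1 m by (simp add: pw_def t_def X_def)
      have t1: "t < 1"
      proof (rule ccontr)
        assume "\<not> t < 1"
        hence "a k * (1 - t) \<le> 0" using ak0 by (simp add: mult_nonneg_nonpos)
        thus False using st as0 by simp
      qed
      have "a (Suc k) powr (- \<alpha>) \<ge> (a k * (1 - t)) powr (- \<alpha>)"
        using st as0 al0 by (intro powr_mono2') auto
      also have "(a k * (1 - t)) powr (- \<alpha>) = a k powr (- \<alpha>) * (1 - t) powr (- \<alpha>)"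
        using ak0 t1 by (simp add: powr_mult)
      also have "\<dots> \<ge> a k powr (- \<alpha>) * (1 + \<alpha> * t)"
        using bern[OF t0 t1 al0] by (intro mult_left_mono) auto
      finally have *: "a k powr (- \<alpha>) + a k powr (- \<alpha>) * \<alpha> * t \<le> a (Suc k) powr (- \<alpha>)"
        by (simp add: algebra_simps)
      have "X powr (1 / (q - 1)) = a k powr \<alpha> * (1 / M) powr (1 / (q - 1))"
        using ak0 M q by (simp add: X_def powr_divide powr_powr \<alpha>_def)
      hence "a k powr (- \<alpha>) * \<alpha> * t = (a k powr (- \<alpha>) * a k powr \<alpha>) * (\<alpha> * (q - 1) / q * (1 / M) powr (1 / (q - 1)))"
        by (simp add: t_def)
      also have "a k powr (- \<alpha>) * a k powr \<alpha> = 1"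
        using ak0 by (simp add: powr_add[symmetric])
      also have "1 * (\<alpha> * (q - 1) / q * (1 / M) powr (1 / (q - 1))) = \<beta>"
        using q M by (simp add: \<alpha>_def \<beta>_def powr_divide)
      finally show ?thesis using * by simp
    qed
    have acc: "a k = 0 \<or> a k0 powr (- \<alpha>) + \<beta> * real (k - k0) \<le> a k powr (- \<alpha>)"
      if "k0 \<le> k" "a k0 \<noteq> 0" for k
      using that(1)
    proof (induction k rule: dec_induct)
      case base then show ?case by simp
    next
      case (step n)
      show ?case
      proof (cases "a (Suc n) = 0")
        case True then show ?thesis by simp
      next
        case False
        hence "a n \<noteq> 0" using mono1[of n] a_nn by (metis antisym)
        hence ih: "a k0 powr (- \<alpha>) + \<beta> * real (n - k0) \<le> a n powr (- \<alpha>)" using step.IH by simp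
        from inc[OF step.hyps(1)] False
        have "a n powr (- \<alpha>) + \<beta> \<le> a (Suc n) powr (- \<alpha>)" by simp
        moreover have "real (Suc n - k0) = real (n - k0) + 1" using step.hyps(1) by simp
        ultimately show ?thesis using ih by (simp add: algebra_simps)
      qed
    qed
    have part_b: "a k \<le> (if a k0 = 0 then 0 else
              (a k0 powr ((r - 1) / (q - 1))
                 + (1 - r) / q * (1 / M powr (1 / (q - 1))) * real (k - k0))
                powr ((q - 1) / (r - 1)))" if kk: "k0 \<le> k" for k
    proof (cases "a k0 = 0")
      case True
      then show ?thesis using monoN[OF kk] a_nn by (simp add: antisym)
    next
      case False
      have e1: "(r - 1) / (q - 1) = - \<alpha>" unfolding \<alpha>_def by (simp add: minus_divide_left)
      have e2: "(q - 1) / (r - 1) = - (1 / \<alpha>)" using r1 q by (simp add: \<alpha>_def field_simps)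
      define S where "S = a k0 powr (- \<alpha>) + \<beta> * real (k - k0)"
      have S0: "0 < S" unfolding S_def using False a_nn be0
        by (intro add_pos_nonneg) (auto simp: less_eq_real_def)
      have goal: "a k \<le> S powr (- (1 / \<alpha>))"
      proof (cases "a k = 0")
        case True then show ?thesis by simp
      next
        case ak: False
        hence ak0: "0 < a k" using a_nn less_eq_real_def by auto
        have "S \<le> a k powr (- \<alpha>)" using acc[OF kk False] ak by (simp add: S_def)
        hence "(a k powr (- \<alpha>)) powr (- (1 / \<alpha>)) \<le> S powr (- (1 / \<alpha>))"
          using S0 al0 by (intro powr_mono2') auto
        also have "(a k powr (- \<alpha>)) powr (- (1 / \<alpha>)) = a k"
          using al0 ak0 by (simp add: powr_powr)
        finally show ?thesis .
      qed
      show ?thesis using False goal by (simp add: e1 e2 S_def \<beta>_def algebra_simps)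
    qed
    show "\<exists>k0. a k0 powr (1 - r) \<le> M
        \<and> (\<forall>k < k0. M < a k powr (1 - r))
        \<and> (\<forall>k \<le> k0. a k \<le> a 0 * (1 - (q - 1) / q) ^ k)
        \<and> (\<forall>k \<ge> k0. a k \<le>
             (if a k0 = 0 then 0 else
              (a k0 powr ((r - 1) / (q - 1))
                 + (1 - r) / q * (1 / M powr (1 / (q - 1))) * real (k - k0))
                powr ((q - 1) / (r - 1))))"
      using Pk0 before part_a part_b by (auto simp: P_def)
  qed
  show ?thesis using S1 P2 P3 by blast
qed



lemma ereal_fin: "a \<noteq> \<infinity> \<Longrightarrow> a \<noteq> -\<infinity> \<Longrightarrow> a = ereal (real_of_ereal a)"
  by (cases a) auto

lemma has_grad_fin: "has_grad f x g \<Longrightarrow> f x \<noteq> \<infinity>"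
  unfolding has_grad_def using eventually_nhds_x_imp_x by blast

lemma convex_real:
  fixes f :: "'a::real_vector \<Rightarrow> ereal"
  assumes cf: "convex_fn f" and pf: "proper_fn f" and fx: "f x \<noteq> \<infinity>" and fy: "f y \<noteq> \<infinity>"
    and t: "0 \<le> t" "t \<le> 1"
  shows "f (x + t *\<^sub>R (y - x)) \<noteq> \<infinity>"
    and "real_of_ereal (f (x + t *\<^sub>R (y - x))) \<le> (1 - t) * real_of_ereal (f x) + t * real_of_ereal (f y)"
proof -
  have ni: "f z \<noteq> -\<infinity>" for z using pf by (auto simp: proper_fn_def)
  have eq: "x + t *\<^sub>R (y - x) = (1 - t) *\<^sub>R x + t *\<^sub>R y" by (simp add: algebra_simps)
  have c: "f (x + t *\<^sub>R (y - x)) \<le> ereal (1 - t) * f x + ereal t * f y"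
    using cf t unfolding convex_fn_def eq by blast
  obtain a b where a: "f x = ereal a" and b: "f y = ereal b" using fx fy ni
    by (meson ereal_fin)
  have c2: "f (x + t *\<^sub>R (y - x)) \<le> ereal ((1 - t) * a + t * b)" using c by (simp add: a b)
  then show "f (x + t *\<^sub>R (y - x)) \<noteq> \<infinity>" by auto
  obtain c where cc: "f (x + t *\<^sub>R (y - x)) = ereal c"
    using c2 ni[of "x + t *\<^sub>R (y - x)"] by (cases "f (x + t *\<^sub>R (y - x))") auto
  show "real_of_ereal (f (x + t *\<^sub>R (y - x))) \<le> (1 - t) * real_of_ereal (f x) + t * real_of_ereal (f y)"
    using c2 by (simp add: cc a b)
qed

lemma grad_ineq:
  fixes f :: "'a::real_inner \<Rightarrow> ereal"
  assumes cf: "convex_fn f" and pf: "proper_fn f" and hg: "has_grad f x g" and fy: "f y \<noteq> \<infinity>"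
  shows "real_of_ereal (f x) + g \<bullet> (y - x) \<le> real_of_ereal (f y)"
proof -
  have fx: "f x \<noteq> \<infinity>" using has_grad_fin[OF hg] .
  define Fr where "Fr z = real_of_ereal (f z)" for z
  define h where "h t = Fr (x + t *\<^sub>R (y - x))" for t
  have hle: "h t \<le> h 0 + t * (Fr y - Fr x)" if "0 \<le> t" "t \<le> 1" for t
    using convex_real(2)[OF cf pf fx fy that] by (simp add: h_def Fr_def algebra_simps)
  have dF: "(Fr has_derivative (\<lambda>v. g \<bullet> v)) (at x)" using hg by (simp add: has_grad_def Fr_def[abs_def])
  have dl: "((\<lambda>t. x + t *\<^sub>R (y - x)) has_derivative (\<lambda>t. t *\<^sub>R (y - x))) (at 0 within {0<..})"
    by (auto intro!: derivative_eq_intros)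
  have dF': "(Fr has_derivative (\<lambda>v. g \<bullet> v)) (at ((\<lambda>t. x + t *\<^sub>R (y - x)) 0))" using dF by simp
  have "(h has_derivative (\<lambda>t. g \<bullet> (t *\<^sub>R (y - x)))) (at 0 within {0<..})"
    unfolding h_def using has_derivative_compose[OF dl dF'] .
  moreover have "(\<lambda>t. g \<bullet> (t *\<^sub>R (y - x))) = (*) (g \<bullet> (y - x))" by (auto simp: algebra_simps)
  ultimately have "(h has_field_derivative (g \<bullet> (y - x))) (at 0 within {0<..})"
    by (simp add: has_field_derivative_def)
  hence lim: "((\<lambda>t. (h t - h 0) / (t - 0)) \<longlongrightarrow> g \<bullet> (y - x)) (at_right 0)"
    by (simp add: has_field_derivative_iff)
  have ev: "\<forall>\<^sub>F t in at_right 0. (h t - h 0) / (t - 0) \<le> Fr y - Fr x"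
  proof -
    have "\<forall>\<^sub>F t in at_right (0::real). t < 1" unfolding eventually_at_right_field by (intro exI[of _ 1]) auto
    moreover have "\<forall>\<^sub>F t in at_right (0::real). 0 < t" by (simp add: eventually_at_right_less)
    ultimately show ?thesis
    proof eventually_elim
      case (elim t)
      have "h t - h 0 \<le> (Fr y - Fr x) * t" using hle[of t] elim by (simp add: algebra_simps)
      thus ?case using elim by (simp add: divide_le_eq)
    qed
  qed
  have "g \<bullet> (y - x) \<le> Fr y - Fr x"
    using tendsto_le[OF _ tendsto_const lim ev] by simp
  thus ?thesis by (simp add: Fr_def)
qed



theorem theorem1:
  fixes f Psi :: "'a::euclidean_space \<Rightarrow> ereal"
    and x s :: "nat \<Rightarrow> 'a" and \<theta> :: "nat \<Rightarrow> real"
    and q r M :: real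
  assumes cpc_f: "cpc_fn f" and cpc_Psi: "cpc_fn Psi"
    and A1: "\<forall>y \<in> edom Psi. \<exists>g. has_grad f y g"
    and A2: "\<forall>y \<in> edom f. \<forall>g. has_grad f y g \<longrightarrow> (\<exists>z. is_argmin_lin Psi g z)"
    and x0: "x 0 \<in> edom Psi"
    and s_def: "\<forall>k. is_argmin_lin Psi (grad f (x k)) (s k)"
    and theta_range: "\<forall>k. 0 \<le> \<theta> k \<and> \<theta> k \<le> 1"
    and x_step: "\<forall>k. x (Suc k) = (1 - \<theta> k) *\<^sub>R x k + \<theta> k *\<^sub>R s k"
    and line_search: "\<forall>k. \<forall>t \<in> {0..1}.
        ereal (1 - \<theta> k) * dgap f Psi (x k) (grad f (x k)) + Dcal f Psi (x k) (s k) (\<theta> k)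
        \<le> ereal (1 - t) * dgap f Psi (x k) (grad f (x k)) + Dcal f Psi (x k) (s k) t"
    and q: "q > 1" and r: "0 \<le> r" "r \<le> 1"
    and M: "M > 0"
    and grow: "growth f Psi q r M"
  shows
    "(\<forall>k. best_gap f Psi x (Suc k) \<le> best_gap f Psi x k *
        (1 - (q - 1) / q * min 1 ((pw (best_gap f Psi x k) (1 - r) / M) powr (1 / (q - 1)))))
   \<and> (r = 1 \<longrightarrow> (\<forall>k. best_gap f Psi x k \<le>
        best_gap f Psi x 0 * (1 - (q - 1) / q * min 1 (M powr (- 1 / (q - 1)))) ^ k))
   \<and> (r < 1 \<longrightarrow> (\<exists>k0. best_gap f Psi x k0 powr (1 - r) \<le> M
        \<and> (\<forall>k < k0. M < best_gap f Psi x k powr (1 - r))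
        \<and> (\<forall>k \<le> k0. best_gap f Psi x k \<le> best_gap f Psi x 0 * (1 - (q - 1) / q) ^ k)
        \<and> (\<forall>k \<ge> k0. best_gap f Psi x k \<le>
             (if best_gap f Psi x k0 = 0 then 0 else
              (best_gap f Psi x k0 powr ((r - 1) / (q - 1))
                 + (1 - r) / q * (1 / M powr (1 / (q - 1))) * real (k - k0))
                powr ((q - 1) / (r - 1))))))"
proof -
  have cvf: "convex_fn f" and pf: "proper_fn f" using cpc_f by (auto simp: cpc_fn_def)
  have cvP: "convex_fn Psi" and pP: "proper_fn Psi" using cpc_Psi by (auto simp: cpc_fn_def)
  have niP: "Psi z \<noteq> -\<infinity>" for z using pP by (auto simp: proper_fn_def)
  have nif: "f z \<noteq> -\<infinity>" for z using pf by (auto simp: proper_fn_def)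
  obtain y0 where y0: "Psi y0 \<noteq> \<infinity>" using pP by (auto simp: proper_fn_def)
  define g where "g i = grad f (x i)" for i
  have sdom: "Psi (s k) \<noteq> \<infinity>" for k
  proof
    assume "Psi (s k) = \<infinity>"
    moreover have "ereal (g k \<bullet> s k) + Psi (s k) \<le> ereal (g k \<bullet> y0) + Psi y0"
      using s_def by (simp add: is_argmin_lin_def g_def)
    ultimately show False using y0 niP[of y0] by (cases "Psi y0") auto
  qed
  define xt where "xt k t = x k + t *\<^sub>R (s k - x k)" for k t
  have xs: "x (Suc k) = xt k (\<theta> k)" for k
    using x_step by (simp add: xt_def algebra_simps)
  have xdom: "Psi (x k) \<noteq> \<infinity>" for k
  proof (induction k)
    case 0 then show ?case using x0 by (simp add: edom_def)
  next
    case (Suc k)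
    show ?case unfolding xs xt_def
      using convex_real(1)[OF cvP pP Suc sdom[of k]] theta_range by auto
  qed
  have xtdom: "Psi (xt k t) \<noteq> \<infinity>" if "0 \<le> t" "t \<le> 1" for k t
    unfolding xt_def using convex_real(1)[OF cvP pP xdom[of k] sdom[of k] that] .
  have fin_f: "f z \<noteq> \<infinity>" if pz: "Psi z \<noteq> \<infinity>" for z
  proof -
    obtain g' where "has_grad f z g'" using A1 pz by (auto simp: edom_def)
    thus ?thesis by (rule has_grad_fin)
  qed
  have hg: "has_grad f (x k) (g k)" for k
  proof -
    obtain g' where "has_grad f (x k) g'" using A1 xdom[of k] by (auto simp: edom_def)
    thus ?thesis unfolding g_def grad_def by (rule someI)
  qed
  define Fr where "Fr z = real_of_ereal (f z)" for z
  define Pr where "Pr z = real_of_ereal (Psi z)" for z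
  have fE: "f z = ereal (Fr z)" if "Psi z \<noteq> \<infinity>" for z
    unfolding Fr_def using ereal_fin[OF fin_f[OF that] nif] .
  have PE: "Psi z = ereal (Pr z)" if "Psi z \<noteq> \<infinity>" for z
    unfolding Pr_def using ereal_fin[OF that niP] .
  have argm: "g i \<bullet> s i + Pr (s i) \<le> g i \<bullet> y + Pr y" if "Psi y \<noteq> \<infinity>" for i y
  proof -
    have "ereal (g i \<bullet> s i) + Psi (s i) \<le> ereal (g i \<bullet> y) + Psi y"
      using s_def by (simp add: is_argmin_lin_def g_def)
    thus ?thesis using PE[OF that] PE[OF sdom[of i]] by simp
  qed
  have gin: "Fr (x i) + g i \<bullet> (y - x i) \<le> Fr y" if "f y \<noteq> \<infinity>" for i y
    using grad_ineq[OF cvf pf hg[of i] that] by (simp add: Fr_def)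
  have conjf: "conj_fn f (g i) = ereal (g i \<bullet> x i - Fr (x i))" for i
    unfolding conj_fn_def
  proof (rule antisym)
    show "(SUP y. ereal (g i \<bullet> y) - f y) \<le> ereal (g i \<bullet> x i - Fr (x i))"
    proof (rule SUP_least)
      fix y
      show "ereal (g i \<bullet> y) - f y \<le> ereal (g i \<bullet> x i - Fr (x i))"
      proof (cases "f y = \<infinity>")
        case True then show ?thesis by simp
      next
        case False
        have fy: "f y = ereal (Fr y)" unfolding Fr_def using ereal_fin[OF False nif] .
        show ?thesis using gin[OF False, of i] by (simp add: fy inner_diff_right)
      qed
    qed
    show "ereal (g i \<bullet> x i - Fr (x i)) \<le> (SUP y. ereal (g i \<bullet> y) - f y)"
      by (rule SUP_upper2[of "x i"]) (auto simp: fE[OF xdom[of i]])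
  qed
  have conjP: "conj_fn Psi (- g i) = ereal (- (g i \<bullet> s i) - Pr (s i))" for i
    unfolding conj_fn_def
  proof (rule antisym)
    show "(SUP y. ereal (- g i \<bullet> y) - Psi y) \<le> ereal (- (g i \<bullet> s i) - Pr (s i))"
    proof (rule SUP_least)
      fix y
      show "ereal (- g i \<bullet> y) - Psi y \<le> ereal (- (g i \<bullet> s i) - Pr (s i))"
      proof (cases "Psi y = \<infinity>")
        case True then show ?thesis by simp
      next
        case False
        show ?thesis using argm[OF False, of i] by (simp add: PE[OF False])
      qed
    qed
    show "ereal (- (g i \<bullet> s i) - Pr (s i)) \<le> (SUP y. ereal (- g i \<bullet> y) - Psi y)"
      by (rule SUP_upper2[of "s i"]) (auto simp: PE[OF sdom[of i]])
  qed
  define \<Phi> where "\<Phi> m = Fr (x m) + Pr (x m)" for m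
  define du where "du i = (g i \<bullet> x i - Fr (x i)) + (- (g i \<bullet> s i) - Pr (s i))" for i
  have dg: "dgap f Psi (x m) (g i) = ereal (\<Phi> m + du i)" for m i
    by (simp add: dgap_def conjf conjP fE[OF xdom[of m]] PE[OF xdom[of m]] \<Phi>_def du_def)
  have bg: "best_gap f Psi x k = Min ((\<lambda>i. \<Phi> k + du i) ` {..k})" for k
    unfolding best_gap_def g_def[symmetric] dg by simp
  have nn: "0 \<le> \<Phi> m + du i" for m i
    using gin[OF fin_f[OF xdom[of m]], of i] argm[OF xdom[of m], of i]
    by (simp add: \<Phi>_def du_def inner_diff_right)
  define a where "a k = best_gap f Psi x k" for k
  define G where "G k = \<Phi> k + du k" for k
  have a_nn: "\<forall>k. 0 \<le> a k" unfolding a_def bg using nn by simp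
  have aG: "\<forall>k. a k \<le> G k" unfolding a_def bg G_def by (auto intro: Min_le)
  define Dr where "Dr k t = Fr (xt k t) - Fr (x k) - g k \<bullet> (xt k t - x k) + Pr (xt k t)
      - (1 - t) * Pr (x k) - t * Pr (s k)" for k t
  have DE: "Dcal f Psi (x k) (s k) t = ereal (Dr k t)" if "0 \<le> t" "t \<le> 1" for k t
    using xtdom[OF that, of k]
    by (simp add: Dcal_def bregman_def xt_def[symmetric] g_def[symmetric] fE PE xdom sdom Dr_def)
  have PhiE: "\<Phi> (Suc k) = \<Phi> k - \<theta> k * G k + Dr k (\<theta> k)" for k
    by (simp add: \<Phi>_def G_def du_def Dr_def xs xt_def inner_diff_right algebra_simps)
  have dgk: "dgap f Psi (x k) (grad f (x k)) = ereal (G k)" for k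
    using dg[of k k] by (simp add: g_def G_def)
  have ls: "(1 - \<theta> k) * G k + Dr k (\<theta> k) \<le> (1 - t) * G k + Dr k t" if "0 \<le> t" "t \<le> 1" for k t
    using line_search[rule_format, of t k] that theta_range DE[OF that, of k] DE[of "\<theta> k" k]
    by (simp add: dgk)
  have gr: "Dr k t \<le> M * t powr q / q * pw (G k) r" if "0 \<le> t" "t \<le> 1" for k t
  proof -
    have "x k \<in> edom Psi" using xdom by (simp add: edom_def)
    hence "Dcal f Psi (x k) (s k) t \<le> ereal (M * t powr q / q * pw (real_of_ereal (dgap f Psi (x k) (grad f (x k)))) r)"
      using grow s_def that unfolding growth_def by auto
    thus ?thesis using DE[OF that, of k] by (simp add: dgk)
  qed
  have step: "\<forall>k. \<forall>t\<in>{0..1}. a (Suc k) \<le> a k - t * G k + M * t powr q / q * pw (G k) r"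
  proof (intro allI ballI)
    fix k t assume t: "t \<in> {0..1::real}"
    have "\<Phi> (Suc k) \<le> \<Phi> k - t * G k + M * t powr q / q * pw (G k) r"
      using PhiE[of k] ls[of t k] gr[of t k] t by (auto simp: algebra_simps)
    have "a k \<in> (\<lambda>i. \<Phi> k + du i) ` {..k}" unfolding a_def bg by (rule Min_in) auto
    then obtain i where i: "i \<le> k" "a k = \<Phi> k + du i" by auto
    have "a (Suc k) \<le> \<Phi> (Suc k) + du i" unfolding a_def bg using i by (auto intro: Min_le)
    thus "a (Suc k) \<le> a k - t * G k + M * t powr q / q * pw (G k) r"
      using \<open>\<Phi> (Suc k) \<le> _\<close> i by linarith
  qed
  show ?thesis using rate[OF q r M a_nn aG step] unfolding a_def .
qed


end
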